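(* Let $P(\lambda)$ be an $n\times n$ singular matrix polynomial of degree $d$ and normal rank $n-k$, and let $S_R(\lambda)=[x_1(\lambda)\ \dots\ x_k(\lambda)]$ be an $n\times k$ matrix polynomial whose columns form a minimal basis of the right nullspace of $P(\lambda)$, with right minimal indices $m_1,\dots,m_k$. Then there exists $V\in\mathbb C^{n\times k}$ such that the polynomial $\det(V^*S_R(\lambda))$ has exactly $M=m_1+\cdots+m_k$ simple zeros.
   Context: Normal rank: $\mathrm{nrank}(P)=\max_{\zeta\in\mathbb C}\mathrm{rank}\,P(\zeta)$; $P$ is singular if $\det P(\lambda)\equiv0$. The right nullspace of $P$ is $\{x(\lambda)\in\mathbb C(\lambda)^n: P(\lambda)x(\lambda)\equiv0\}$. A polynomial basis of it is minimal if the sum of the degrees of its vectors is minimal among all polynomial bases; these degrees are the right minimal indices. *)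

theory Defs
  imports "Jordan_Normal_Form.DL_Rank" "Jordan_Normal_Form.Schur_Decomposition"
    "HOL-Computational_Algebra.Polynomial" "HOL-Computational_Algebra.Fraction_Field"
begin

text \<open>Matrix polynomials are represented as matrices with entries in complex poly.
  Rational vectors (elements of C(lambda)^n) have entries in complex poly fract.\<close>

type_synonym pmat = "complex poly mat"

definition peval :: "pmat \<Rightarrow> complex \<Rightarrow> complex mat" where
  "peval P z = map_mat (\<lambda>p. poly p z) P"

definition nrank :: "pmat \<Rightarrow> nat" where
  "nrank P = Max {vec_space.rank (dim_row P) (peval P z) | z. True}"

definition mdeg :: "pmat \<Rightarrow> nat" where
  "mdeg P = Max ({degree (P $$ (i,j)) | i j. i < dim_row P \<and> j < dim_col P} \<union> {0})"

definition vdeg :: "complex poly vec \<Rightarrow> nat" where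
  "vdeg v = Max ({degree (v $ i) | i. i < dim_vec v} \<union> {0})"

definition singular_pmat :: "pmat \<Rightarrow> bool" where
  "singular_pmat P \<longleftrightarrow> dim_row P = dim_col P \<and> det P = 0"

definition fmat :: "pmat \<Rightarrow> complex poly fract mat" where
  "fmat P = map_mat to_fract P"

definition right_nullspace :: "pmat \<Rightarrow> complex poly fract vec set" where
  "right_nullspace P = {x. dim_vec x = dim_col P \<and> fmat P *\<^sub>v x = 0\<^sub>v (dim_row P)}"

definition poly_basis_right_nullspace :: "pmat \<Rightarrow> pmat \<Rightarrow> bool" where
  "poly_basis_right_nullspace P S \<longleftrightarrow>
     dim_row S = dim_col P \<and>
     (\<forall>i < dim_col S. map_vec to_fract (col S i) \<in> right_nullspace P) \<and>
     (\<forall>c. dim_vec c = dim_col S \<longrightarrow> fmat S *\<^sub>v c = 0\<^sub>v (dim_row S) \<longrightarrow> c = 0\<^sub>v (dim_col S)) \<and>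
     (\<forall>x \<in> right_nullspace P. \<exists>c. dim_vec c = dim_col S \<and> x = fmat S *\<^sub>v c)"

definition col_deg_sum :: "pmat \<Rightarrow> nat" where
  "col_deg_sum S = (\<Sum>i < dim_col S. vdeg (col S i))"

definition minimal_basis_right_nullspace :: "pmat \<Rightarrow> pmat \<Rightarrow> bool" where
  "minimal_basis_right_nullspace P S \<longleftrightarrow>
     poly_basis_right_nullspace P S \<and>
     (\<forall>T. poly_basis_right_nullspace P T \<longrightarrow> col_deg_sum S \<le> col_deg_sum T)"

definition num_simple_zeros :: "complex poly \<Rightarrow> nat" where
  "num_simple_zeros q = card {z. poly q z = 0 \<and> order z q = 1}"

definition const_pmat :: "complex mat \<Rightarrow> pmat" where
  "const_pmat V = map_mat (\<lambda>c. [:c:]) V"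

end

theory Submission
  imports Defs "HOL-Computational_Algebra.Fundamental_Theorem_Algebra" "HOL-Computational_Algebra.Field_as_Ring"
begin

definition dbl :: "complex poly \<Rightarrow> complex \<Rightarrow> bool" where
  "dbl p z \<longleftrightarrow> poly p z = 0 \<and> poly (pderiv p) z = 0"

lemma prop_lemma:
  fixes g h :: "complex poly"
  assumes h: "h \<noteq> 0" and W: "g * pderiv h = pderiv g * h"
  shows "\<exists>c. g = smult c h"
proof -
  define d where "d = gcd g h"
  have d0: "d \<noteq> 0" using h d_def by auto
  obtain g1 where g1: "g = d * g1" unfolding d_def by (meson dvd_def gcd_dvd1)
  obtain h1 where h1: "h = d * h1" unfolding d_def by (meson dvd_def gcd_dvd2)
  have cop: "coprime g1 h1"
    using g1 h1 d0 unfolding d_def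
    by (intro gcd_coprime[of g h]) (auto simp: mult.commute)
  have "d * d * (g1 * pderiv h1 - pderiv g1 * h1) = 0"
    using W unfolding g1 h1 pderiv_mult by (simp add: algebra_simps)
  hence E: "g1 * pderiv h1 = pderiv g1 * h1" using d0 by simp
  have "g1 dvd pderiv g1 * h1" using E by (metis dvd_triv_left)
  hence "g1 dvd pderiv g1" using cop by (simp add: coprime_dvd_mult_left_iff)
  hence dg: "pderiv g1 = 0"
  proof -
    assume a: "g1 dvd pderiv g1"
    show ?thesis
    proof (rule ccontr)
      assume nz: "pderiv g1 \<noteq> 0"
      hence "degree g1 \<le> degree (pderiv g1)" using a by (simp add: dvd_imp_degree_le)
      moreover have "degree g1 > 0" using nz pderiv_eq_0_iff by auto
      ultimately show False by (simp add: degree_pderiv)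
    qed
  qed
  have "h1 dvd h1 * pderiv g1" by simp
  hence "h1 dvd g1 * pderiv h1" using E by (simp add: mult.commute)
  hence "h1 dvd pderiv h1" using cop by (metis coprime_commute coprime_dvd_mult_right_iff)
  hence dh: "pderiv h1 = 0"
  proof -
    assume a: "h1 dvd pderiv h1"
    show ?thesis
    proof (rule ccontr)
      assume nz: "pderiv h1 \<noteq> 0"
      hence "degree h1 \<le> degree (pderiv h1)" using a by (simp add: dvd_imp_degree_le)
      moreover have "degree h1 > 0" using nz pderiv_eq_0_iff by auto
      ultimately show False by (simp add: degree_pderiv)
    qed
  qed
  obtain a where a: "g1 = [:a:]" using dg pderiv_iszero by blast
  obtain b where b: "h1 = [:b:]" using dh pderiv_iszero by blast
  have b0: "b \<noteq> 0" using h h1 b by auto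
  have gg: "g = smult a d" and hh: "h = smult b d" by (simp_all add: g1 h1 a b)
  have "g = smult (a / b) h" unfolding gg hh using b0 by simp
  thus ?thesis by blast
qed

lemma dbl_pencil:
  fixes g h :: "complex poly"
  shows "dbl (g + smult t h) z \<longleftrightarrow>
     poly g z + t * poly h z = 0 \<and> poly (pderiv g) z + t * poly (pderiv h) z = 0"
  unfolding dbl_def by (simp add: pderiv_add pderiv_smult)

lemma pencil_two:
  fixes g h :: "complex poly"
  assumes "dbl (g + smult t1 h) z" "dbl (g + smult t2 h) z" "t1 \<noteq> t2"
  shows "dbl g z \<and> dbl h z"
proof -
  have e: "poly g z + t1 * poly h z = 0" "poly (pderiv g) z + t1 * poly (pderiv h) z = 0"
    "poly g z + t2 * poly h z = 0" "poly (pderiv g) z + t2 * poly (pderiv h) z = 0"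
    using assms(1,2) unfolding dbl_pencil by auto
  have "(t1 - t2) * poly h z = (poly g z + t1 * poly h z) - (poly g z + t2 * poly h z)"
    by (simp add: algebra_simps)
  hence "(t1 - t2) * poly h z = 0" using e(1,3) by simp
  hence h0: "poly h z = 0" using assms(3) by simp
  have "(t1 - t2) * poly (pderiv h) z = (poly (pderiv g) z + t1 * poly (pderiv h) z) - (poly (pderiv g) z + t2 * poly (pderiv h) z)"
    by (simp add: algebra_simps)
  hence "(t1 - t2) * poly (pderiv h) z = 0" using e(2,4) by simp
  hence h1: "poly (pderiv h) z = 0" using assms(3) by simp
  show ?thesis using e h0 h1 unfolding dbl_def by simp
qed

lemma pencil_finite:
  fixes g h :: "complex poly" and Q :: "complex \<Rightarrow> bool"
  assumes nd: "\<not>(\<exists>z. dbl g z \<and> dbl h z \<and> Q z)"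
  and fin: "finite {z. Q z} \<or> (\<forall>z. Q z)"
  shows "finite {t. \<exists>z. dbl (g + smult t h) z \<and> Q z}"
proof -
  define B where "B = {t. \<exists>z. dbl (g + smult t h) z \<and> Q z}"
  define Z where "Z = {z. Q z \<and> (\<exists>t. dbl (g + smult t h) z)}"
  define zf where "zf t = (SOME z. dbl (g + smult t h) z \<and> Q z)" for t
  have zf: "dbl (g + smult t h) (zf t) \<and> Q (zf t)" if "t \<in> B" for t
    using that unfolding B_def zf_def by (metis (mono_tags, lifting) someI_ex mem_Collect_eq)
  have inj: "inj_on zf B"
  proof (rule inj_onI)
    fix t1 t2 assume a: "t1 \<in> B" "t2 \<in> B" "zf t1 = zf t2"
    show "t1 = t2"
    proof (rule ccontr)
      assume "t1 \<noteq> t2"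
      hence "dbl g (zf t1) \<and> dbl h (zf t1)" using zf[OF a(1)] zf[OF a(2)] a(3) pencil_two by metis
      thus False using nd zf[OF a(1)] by blast
    qed
  qed
  have img: "zf ` B \<subseteq> Z" using zf unfolding Z_def by blast
  show ?thesis
  proof (cases "finite {z. Q z}")
    case True
    have "finite Z" by (rule finite_subset[OF _ True]) (auto simp: Z_def)
    thus ?thesis using inj img B_def finite_imageD finite_subset by metis
  next
    case False
    hence allQ: "\<forall>z. Q z" using fin by blast
    define Wr where "Wr = g * pderiv h - pderiv g * h"
    show ?thesis
    proof (cases "Wr = 0")
      case False
      have "Z \<subseteq> {z. poly Wr z = 0}"
      proof
        fix z assume "z \<in> Z"
        then obtain t where "dbl (g + smult t h) z" unfolding Z_def by blast
        hence e: "poly g z = - t * poly h z" "poly (pderiv g) z = - t * poly (pderiv h) z"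
          unfolding dbl_pencil by (auto simp: algebra_simps eq_neg_iff_add_eq_0)
        show "z \<in> {z. poly Wr z = 0}" unfolding Wr_def using e by (simp add: algebra_simps)
      qed
      hence "finite Z" using poly_roots_finite[OF False] finite_subset by blast
      thus ?thesis using inj img B_def finite_imageD finite_subset by metis
    next
      case True
      show ?thesis
      proof (cases "h = 0")
        case True
        have "dbl 0 z" for z unfolding dbl_def by simp
        have "{t. \<exists>z. dbl (g + smult t h) z \<and> Q z} = {}"
        proof -
          { fix t z assume a: "dbl (g + smult t h) z" "Q z"
            hence "dbl g z" using True by simp
            hence False using a(2) nd \<open>\<And>z. dbl 0 z\<close> True by blast }
          thus ?thesis by blast
        qed
        thus ?thesis by (metis finite.emptyI)
      next
        case hnz: False
        obtain c where c: "g = smult c h" using prop_lemma[OF hnz] True unfolding Wr_def by auto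
        have "{t. \<exists>z. dbl (g + smult t h) z \<and> Q z} \<subseteq> {-c}"
        proof
          fix t assume "t \<in> {t. \<exists>z. dbl (g + smult t h) z \<and> Q z}"
          then obtain z where z: "dbl (g + smult t h) z" "Q z" by blast
          show "t \<in> {-c}"
          proof (rule ccontr)
            assume "t \<notin> {-c}"
            hence ct: "c + t \<noteq> 0" by (auto simp: add_eq_0_iff)
            have "dbl (smult (c + t) h) z" using z(1) unfolding c by (simp add: smult_add_left)
            hence dh: "dbl h z" using ct unfolding dbl_def by (simp add: pderiv_smult)
            hence "dbl g z" unfolding c dbl_def by (simp add: pderiv_smult)
            thus False using dh z(2) nd by blast
          qed
        qed
        thus ?thesis using finite_subset by blast
      qed
    qed
  qed
qed

lemma lin_comb_gen:
  fixes y :: "nat \<Rightarrow> complex poly"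
  assumes nd: "\<not>(\<exists>z. \<forall>i<n. dbl (y i) z)"
  shows "j \<le> n \<Longrightarrow> \<exists>w. (coeff (\<Sum>i<j. smult (w i) (y i)) D \<noteq> 0 \<or> (\<forall>i<j. coeff (y i) D = 0)) \<and>
     \<not>(\<exists>z. dbl (\<Sum>i<j. smult (w i) (y i)) z \<and> (\<forall>i. j \<le> i \<and> i < n \<longrightarrow> dbl (y i) z))"
proof (induction j)
  case 0
  have "dbl 0 z" for z unfolding dbl_def by simp
  thus ?case using nd by auto
next
  case (Suc j)
  then obtain w where w: "coeff (\<Sum>i<j. smult (w i) (y i)) D \<noteq> 0 \<or> (\<forall>i<j. coeff (y i) D = 0)"
    "\<not>(\<exists>z. dbl (\<Sum>i<j. smult (w i) (y i)) z \<and> (\<forall>i. j \<le> i \<and> i < n \<longrightarrow> dbl (y i) z))" by auto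
  define g where "g = (\<Sum>i<j. smult (w i) (y i))"
  define Q where "Q z = (\<forall>i. Suc j \<le> i \<and> i < n \<longrightarrow> dbl (y i) z)" for z
  have nd2: "\<not>(\<exists>z. dbl g z \<and> dbl (y j) z \<and> Q z)"
  proof
    assume "\<exists>z. dbl g z \<and> dbl (y j) z \<and> Q z"
    then obtain z where z: "dbl g z" "dbl (y j) z" "Q z" by blast
    have "\<forall>i. j \<le> i \<and> i < n \<longrightarrow> dbl (y i) z" using z(2,3) unfolding Q_def
      by (metis Suc_leI le_neq_implies_less)
    thus False using w(2) z(1) unfolding g_def by blast
  qed
  have fin: "finite {z. Q z} \<or> (\<forall>z. Q z)"
  proof (cases "\<exists>i. Suc j \<le> i \<and> i < n \<and> y i \<noteq> 0")
    case True
    then obtain i where i: "Suc j \<le> i" "i < n" "y i \<noteq> 0" by blast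
    have "{z. Q z} \<subseteq> {z. poly (y i) z = 0}" using i unfolding Q_def dbl_def by auto
    thus ?thesis using poly_roots_finite[OF i(3)] finite_subset by blast
  next
    case False
    have "dbl 0 z" for z unfolding dbl_def by simp
    thus ?thesis using False unfolding Q_def by auto
  qed
  define c where "c = coeff (y j) D"
  have finB: "finite ({t. \<exists>z. dbl (g + smult t (y j)) z \<and> Q z} \<union> {0, - coeff g D / c})"
    using pencil_finite[OF nd2 fin] by simp
  obtain t where t: "t \<notin> {t. \<exists>z. dbl (g + smult t (y j)) z \<and> Q z} \<union> {0, - coeff g D / c}"
    using ex_new_if_finite[OF infinite_UNIV_char_0 finB] by blast
  define w' where "w' = w(j := t)"
  have sum: "(\<Sum>i<Suc j. smult (w' i) (y i)) = g + smult t (y j)"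
    unfolding g_def w'_def by (simp add: sum.lessThan_Suc)
  have "coeff (g + smult t (y j)) D \<noteq> 0 \<or> (\<forall>i<Suc j. coeff (y i) D = 0)"
  proof (cases "coeff g D = 0")
    case True
    hence "\<forall>i<j. coeff (y i) D = 0" using w(1) g_def by auto
    thus ?thesis using t True unfolding c_def by (auto simp: less_Suc_eq)
  next
    case False
    show ?thesis
    proof (cases "c = 0")
      case True thus ?thesis using False unfolding c_def by simp
    next
      case cnz: False
      have "coeff g D + t * c \<noteq> 0"
      proof
        assume "coeff g D + t * c = 0"
        hence "t = - coeff g D / c" using cnz by (simp add: field_simps eq_neg_iff_add_eq_0)
        thus False using t by simp
      qed
      thus ?thesis unfolding c_def by simp
    qed
  qed
  moreover have "\<not>(\<exists>z. dbl (g + smult t (y j)) z \<and> Q z)" using t by blast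
  ultimately show ?case unfolding sum[symmetric] Q_def by blast
qed

lemma lin_comb:
  fixes y :: "nat \<Rightarrow> complex poly"
  assumes lc: "\<exists>i<n. coeff (y i) D \<noteq> 0"
  and nd: "\<not>(\<exists>z. \<forall>i<n. dbl (y i) z)"
  shows "\<exists>w. coeff (\<Sum>i<n. smult (w i) (y i)) D \<noteq> 0 \<and> \<not>(\<exists>z. dbl (\<Sum>i<n. smult (w i) (y i)) z)"
proof -
  obtain w where w: "coeff (\<Sum>i<n. smult (w i) (y i)) D \<noteq> 0 \<or> (\<forall>i<n. coeff (y i) D = 0)"
     "\<not>(\<exists>z. dbl (\<Sum>i<n. smult (w i) (y i)) z \<and> (\<forall>i. n \<le> i \<and> i < n \<longrightarrow> dbl (y i) z))"
    using lin_comb_gen[OF nd, where j=n and D=D] by auto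
  show ?thesis
    apply (rule exI[of _ w])
    using w lc by auto
qed


lemma coeff_mult_le:
  fixes p q :: "'a::comm_semiring_1 poly"
  assumes "degree p \<le> a" "degree q \<le> b"
  shows "coeff (p * q) (a + b) = coeff p a * coeff q b"
proof -
  have "coeff (p * q) (a + b) = (\<Sum>i\<le>a+b. coeff p i * coeff q (a + b - i))" by (rule coeff_mult)
  also have "\<dots> = (\<Sum>i\<le>a+b. if i = a then coeff p a * coeff q b else 0)"
  proof (rule sum.cong[OF refl])
    fix i assume "i \<in> {..a+b}"
    show "coeff p i * coeff q (a + b - i) = (if i = a then coeff p a * coeff q b else 0)"
    proof (cases "i < a")
      case True
      hence "coeff q (a + b - i) = 0" using assms(2) by (intro coeff_eq_0) auto
      thus ?thesis using True by simp
    next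
      case False
      show ?thesis
      proof (cases "i = a")
        case False
        hence "coeff p i = 0" using assms(1) \<open>\<not> i < a\<close> by (intro coeff_eq_0) auto
        thus ?thesis using False by simp
      qed simp
    qed
  qed
  also have "\<dots> = coeff p a * coeff q b" by (simp add: sum.delta)
  finally show ?thesis .
qed

lemma det_degree_le:
  fixes A :: "complex poly mat"
  assumes A: "A \<in> carrier_mat K K" and deg: "\<forall>r<K. \<forall>i<K. degree (A $$ (r,i)) \<le> \<mu> i"
  shows "degree (det A) \<le> (\<Sum>i<K. \<mu> i)"
proof -
  have "det A = (\<Sum>p \<in> {p. p permutes {0..<K}}. signof p * (\<Prod>i = 0..<K. A $$ (i, p i)))"
    by (rule det_def'[OF A])
  also have "degree \<dots> \<le> (\<Sum>i<K. \<mu> i)"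
  proof (rule degree_sum_le)
    show "finite {p. p permutes {0..<K}}" by (simp add: finite_permutations)
  next
    fix p assume "p \<in> {p. p permutes {0..<K}}"
    hence p: "p permutes {0..<K}" by simp
    have "degree (\<Prod>i = 0..<K. A $$ (i, p i)) \<le> (\<Sum>i = 0..<K. degree (A $$ (i, p i)))"
      using degree_prod_sum_le[of "{0..<K}" "\<lambda>i. A $$ (i, p i)"] by (simp add: o_def)
    also have "\<dots> \<le> (\<Sum>i = 0..<K. \<mu> (p i))"
      by (rule sum_mono) (use deg p permutes_in_image in auto)
    also have "\<dots> = (\<Sum>i = 0..<K. \<mu> i)"
      using sum.reindex_bij_betw[OF permutes_imp_bij[OF p], of \<mu>] by simp
    also have "\<dots> = (\<Sum>i<K. \<mu> i)" by (simp add: atLeast0LessThan)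
    finally have d: "degree (\<Prod>i = 0..<K. A $$ (i, p i)) \<le> (\<Sum>i<K. \<mu> i)" .
    have "signof p = (1::complex poly) \<or> signof p = (-1::complex poly)" by (simp add: sign_def)
    thus "degree (signof p * (\<Prod>i = 0..<K. A $$ (i, p i))) \<le> (\<Sum>i<K. \<mu> i)"
      using d by auto
  qed
  finally show ?thesis .
qed

lemma simple_zeros_count:
  fixes p :: "complex poly"
  assumes p0: "p \<noteq> 0" and nd: "\<not>(\<exists>z. dbl p z)"
  shows "num_simple_zeros p = degree p"
proof -
  have ord: "order z p = 1" if "poly p z = 0" for z
  proof -
    have "degree p \<noteq> 0" using that p0
      by (metis degree_eq_zeroE poly_const_conv pCons_0_0)
    hence pd: "pderiv p \<noteq> 0" by (simp add: pderiv_eq_0_iff)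
    have "poly (pderiv p) z \<noteq> 0" using nd that unfolding dbl_def by auto
    hence "order z (pderiv p) = 0" by (simp add: order_root)
    thus ?thesis using order_pderiv[OF p0 that] by simp
  qed
  have set: "{z. poly p z = 0 \<and> order z p = 1} = {z. poly p z = 0}" using ord by auto
  have fin: "finite {z. poly p z = 0}" using poly_roots_finite[OF p0] .
  have "proots p = mset_set {z. poly p z = 0}"
  proof (rule multiset_eqI)
    fix z
    show "count (proots p) z = count (mset_set {z. poly p z = 0}) z"
      using p0 fin ord by (cases "poly p z = 0") (auto simp: order_root)
  qed
  hence "card {z. poly p z = 0} = degree p" using size_proots_complex[of p] by simp
  thus ?thesis unfolding num_simple_zeros_def set .
qed

lemma cp_index:
  assumes W: "W \<in> carrier_mat K n" and S: "S \<in> carrier_mat n k" and r: "r < K" and j: "j < k"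
  shows "(const_pmat W * S) $$ (r, j) = (\<Sum>l<n. smult (W $$ (r,l)) (S $$ (l,j)))"
proof -
  have "(const_pmat W * S) $$ (r, j) = row (const_pmat W) r \<bullet> col S j"
    using W S r j unfolding const_pmat_def by simp
  also have "\<dots> = (\<Sum>l\<in>{0..<n}. row (const_pmat W) r $ l * col S j $ l)"
    unfolding scalar_prod_def using S by simp
  also have "\<dots> = (\<Sum>l<n. smult (W $$ (r,l)) (S $$ (l,j)))"
    unfolding atLeast0LessThan
    by (rule sum.cong[OF refl]) (use W S r j in \<open>auto simp: const_pmat_def\<close>)
  finally show ?thesis .
qed

lemma cp_carrier:
  assumes W: "W \<in> carrier_mat K n" and S: "S \<in> carrier_mat n k"
  shows "const_pmat W * S \<in> carrier_mat K k"
  using W S unfolding const_pmat_def by auto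


lemma pderiv_sum: "pderiv (\<Sum>x\<in>A. f x) = (\<Sum>x\<in>A. pderiv (f x))"
  using higher_pderiv_sum[of 1 f A] by simp

lemma smult_sum_right: "smult a (sum f A) = (\<Sum>x\<in>A. smult a (f x))"
  by (induction A rule: infinite_finite_induct) (auto simp: smult_add_right)

lemma sum_skip:
  fixes m :: "nat \<Rightarrow> nat"
  shows "j \<le> k \<Longrightarrow> (\<Sum>i<k. m (if i < j then i else Suc i)) + m j = (\<Sum>i<Suc k. m i)"
proof (induction k)
  case 0 thus ?case by simp
next
  case (Suc k)
  show ?case
  proof (cases "j \<le> k")
    case True
    have "(\<Sum>i<Suc k. m (if i < j then i else Suc i)) + m j
        = (\<Sum>i<k. m (if i < j then i else Suc i)) + m j + m (Suc k)" using True by simp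
    also have "\<dots> = (\<Sum>i<Suc (Suc k). m i)" using Suc.IH[OF True] by simp
    finally show ?thesis .
  next
    case False
    hence j: "j = Suc k" using Suc.prems by simp
    have e: "(\<Sum>i<Suc k. m (if i < j then i else Suc i)) = (\<Sum>i<Suc k. m i)"
      using j by (intro sum.cong) auto
    have s: "(\<Sum>i<Suc (Suc k). m i) = (\<Sum>i<Suc k. m i) + m (Suc k)" by (rule sum.lessThan_Suc)
    show ?thesis by (subst e) (simp only: s j)
  qed
qed

lemma det_0dim: "A \<in> carrier_mat 0 0 \<Longrightarrow> det A = 1"
proof -
  assume A: "A \<in> carrier_mat 0 0"
  have "A = 1\<^sub>m 0" by (rule eq_matI) (use A in auto)
  thus ?thesis by simp
qed


lemma main_ind:
  fixes m :: "nat \<Rightarrow> nat" and S :: "complex poly mat"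
  shows "S \<in> carrier_mat n k \<Longrightarrow> (\<forall>l<n. \<forall>i<k. degree (S $$ (l,i)) \<le> m i) \<Longrightarrow>
    (\<forall>z c. (\<forall>l<n. (\<Sum>i<k. c i * poly (S $$ (l,i)) z) = 0) \<longrightarrow> (\<forall>i<k. c i = 0)) \<Longrightarrow>
    (\<forall>c. (\<forall>l<n. (\<Sum>i<k. c i * coeff (S $$ (l,i)) (m i)) = 0) \<longrightarrow> (\<forall>i<k. c i = 0)) \<Longrightarrow>
    \<exists>W \<in> carrier_mat k n. coeff (det (const_pmat W * S)) (\<Sum>i<k. m i) \<noteq> 0 \<and>
       \<not>(\<exists>z. dbl (det (const_pmat W * S)) z)"
proof (induction k arbitrary: S m)
  case 0
  have "det (const_pmat (0\<^sub>m 0 n) * S) = 1"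
    by (rule det_0dim) (use 0 cp_carrier[of "0\<^sub>m 0 n" 0 n S 0] in auto)
  moreover have "\<not> dbl 1 z" for z unfolding dbl_def by simp
  ultimately show ?case by (intro bexI[of _ "0\<^sub>m 0 n"]) auto
next
  case (Suc k)
  note S = Suc.prems(1) and deg = Suc.prems(2) and hA = Suc.prems(3) and hB = Suc.prems(4)
  define S' where "S' = mat n k (\<lambda>(l,i). S $$ (l, Suc i))"
  define m' where "m' i = m (Suc i)" for i
  have S': "S' \<in> carrier_mat n k" unfolding S'_def by simp
  have deg': "\<forall>l<n. \<forall>i<k. degree (S' $$ (l,i)) \<le> m' i" using deg unfolding S'_def m'_def by auto
  have hA': "\<forall>z c. (\<forall>l<n. (\<Sum>i<k. c i * poly (S' $$ (l,i)) z) = 0) \<longrightarrow> (\<forall>i<k. c i = 0)"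
  proof (rule allI, rule allI, rule impI)
    fix z c assume h: "\<forall>l<n. (\<Sum>i<k. c i * poly (S' $$ (l,i)) z) = 0"
    define c0 where "c0 i = (if i = 0 then 0 else c (i - 1))" for i
    have eq: "(\<Sum>i<Suc k. c0 i * poly (S $$ (l,i)) z) = (\<Sum>i<k. c i * poly (S' $$ (l,i)) z)"
      if l: "l < n" for l
      unfolding sum.lessThan_Suc_shift by (simp add: c0_def) (intro sum.cong, auto simp: S'_def l)
    have P: "\<forall>l<n. (\<Sum>i<Suc k. c0 i * poly (S $$ (l,i)) z) = 0" using eq h by simp
    have Q: "\<forall>i<Suc k. c0 i = 0" using mp[OF spec[OF spec[OF hA, of z], of c0] P] .
    show "\<forall>i<k. c i = 0"
    proof (intro allI impI)
      fix i assume "i < k"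
      hence "c0 (Suc i) = 0" using Q by simp
      thus "c i = 0" by (simp add: c0_def)
    qed
  qed
  have hB': "\<forall>c. (\<forall>l<n. (\<Sum>i<k. c i * coeff (S' $$ (l,i)) (m' i)) = 0) \<longrightarrow> (\<forall>i<k. c i = 0)"
  proof (rule allI, rule impI)
    fix c assume h: "\<forall>l<n. (\<Sum>i<k. c i * coeff (S' $$ (l,i)) (m' i)) = 0"
    define c0 where "c0 i = (if i = 0 then 0 else c (i - 1))" for i
    have eq: "(\<Sum>i<Suc k. c0 i * coeff (S $$ (l,i)) (m i)) = (\<Sum>i<k. c i * coeff (S' $$ (l,i)) (m' i))"
      if l: "l < n" for l
      unfolding sum.lessThan_Suc_shift by (simp add: c0_def) (intro sum.cong, auto simp: S'_def m'_def l)
    have P: "\<forall>l<n. (\<Sum>i<Suc k. c0 i * coeff (S $$ (l,i)) (m i)) = 0" using eq h by simp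
    have Q: "\<forall>i<Suc k. c0 i = 0" using mp[OF spec[OF hB, of c0] P] .
    show "\<forall>i<k. c i = 0"
    proof (intro allI impI)
      fix i assume "i < k"
      hence "c0 (Suc i) = 0" using Q by simp
      thus "c i = 0" by (simp add: c0_def)
    qed
  qed
  obtain W' where W': "W' \<in> carrier_mat k n"
    and lcW': "coeff (det (const_pmat W' * S')) (\<Sum>i<k. m' i) \<noteq> 0"
    and ndW': "\<not>(\<exists>z. dbl (det (const_pmat W' * S')) z)"
    using Suc.IH[OF S' deg' hA' hB'] by blast
  define D where "D j = mat k k (\<lambda>(r,i). \<Sum>l<n. smult (W' $$ (r,l)) (S $$ (l, if i < j then i else Suc i)))" for j
  define C where "C j = (-1)^j * det (D j)" for j
  define M where "M = (\<Sum>i<Suc k. m i)"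
  define y where "y l = (\<Sum>j<Suc k. S $$ (l,j) * C j)" for l
  have C0: "C 0 = det (const_pmat W' * S')"
  proof -
    have CP: "const_pmat W' * S' \<in> carrier_mat k k" by (rule cp_carrier[OF W' S'])
    have "D 0 = const_pmat W' * S'"
    proof (rule eq_matI)
      fix r i assume "r < dim_row (const_pmat W' * S')" "i < dim_col (const_pmat W' * S')"
      hence ri: "r < k" "i < k" using CP by auto
      show "D 0 $$ (r,i) = (const_pmat W' * S') $$ (r,i)"
        using cp_index[OF W' S' ri] ri by (simp add: D_def S'_def)
    qed (use CP in \<open>auto simp: D_def\<close>)
    thus ?thesis unfolding C_def by simp
  qed
  have M0: "M - m 0 = (\<Sum>i<k. m' i)" unfolding M_def m'_def sum.lessThan_Suc_shift by simp
  have degC: "degree (C j) \<le> M - m j" if j: "j < Suc k" for j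
  proof -
    have "degree (det (D j)) \<le> (\<Sum>i<k. m (if i < j then i else Suc i))"
    proof (rule det_degree_le)
      show "D j \<in> carrier_mat k k" unfolding D_def by simp
      show "\<forall>r<k. \<forall>i<k. degree (D j $$ (r, i)) \<le> m (if i < j then i else Suc i)"
      proof (intro allI impI)
        fix r i assume ri: "r < k" "i < k"
        have "degree (D j $$ (r, i)) = degree (\<Sum>l<n. smult (W' $$ (r,l)) (S $$ (l, if i < j then i else Suc i)))"
          unfolding D_def using ri by simp
        also have "\<dots> \<le> m (if i < j then i else Suc i)"
        proof (rule degree_sum_le)
          fix l assume "l \<in> {..<n}"
          hence "degree (S $$ (l, if i < j then i else Suc i)) \<le> m (if i < j then i else Suc i)"
            using deg ri j by auto
          thus "degree (smult (W' $$ (r,l)) (S $$ (l, if i < j then i else Suc i))) \<le> m (if i < j then i else Suc i)"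
            using degree_smult_le le_trans by blast
        qed simp
        finally show "degree (D j $$ (r, i)) \<le> m (if i < j then i else Suc i)" .
      qed
    qed
    also have "\<dots> = M - m j" using sum_skip[of j k m] j unfolding M_def by simp
    finally have dD: "degree (det (D j)) \<le> M - m j" .
    have "(-1::complex poly)^j = 1 \<or> (-1::complex poly)^j = -1" by (cases "even j") auto
    thus ?thesis using dD unfolding C_def by auto
  qed
  have mjM: "m j \<le> M" if "j < Suc k" for j
    unfolding M_def using that by (intro member_le_sum) auto
  have lap: "det (const_pmat W * S) = (\<Sum>l<n. smult (W $$ (0,l)) (y l))"
    if W: "W \<in> carrier_mat (Suc k) n" and Wr: "\<forall>r<k. \<forall>l<n. W $$ (Suc r, l) = W' $$ (r,l)" for W
  proof -
    define A where "A = const_pmat W * S"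
    have A: "A \<in> carrier_mat (Suc k) (Suc k)" unfolding A_def using cp_carrier[OF W S] .
    have cof: "cofactor A 0 j = C j" if j: "j < Suc k" for j
    proof -
      have "mat_delete A 0 j = D j"
      proof (rule eq_matI)
        fix r i assume ri: "r < dim_row (D j)" "i < dim_col (D j)"
        hence ri': "r < k" "i < k" unfolding D_def by auto
        have "mat_delete A 0 j $$ (r, i) = A $$ (Suc r, if i < j then i else Suc i)"
          unfolding mat_delete_def using A ri' by simp
        also have "\<dots> = D j $$ (r,i)" unfolding A_def D_def
          using cp_index[OF W S, of "Suc r" "if i < j then i else Suc i"] ri' Wr by auto
        finally show "mat_delete A 0 j $$ (r, i) = D j $$ (r,i)" .
      qed (use A in \<open>auto simp: D_def\<close>)
      thus ?thesis unfolding cofactor_def C_def by simp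
    qed
    have "det A = (\<Sum>j<Suc k. A $$ (0,j) * cofactor A 0 j)"
      by (rule laplace_expansion_row[OF A]) simp
    also have "\<dots> = (\<Sum>j<Suc k. (\<Sum>l<n. smult (W $$ (0,l)) (S $$ (l,j))) * C j)"
      by (rule sum.cong[OF refl]) (use cof cp_index[OF W S] in \<open>auto simp: A_def\<close>)
    also have "\<dots> = (\<Sum>j<Suc k. \<Sum>l<n. smult (W $$ (0,l)) (S $$ (l,j) * C j))"
      by (simp add: sum_distrib_right)
    also have "\<dots> = (\<Sum>l<n. \<Sum>j<Suc k. smult (W $$ (0,l)) (S $$ (l,j) * C j))"
      by (rule sum.swap)
    also have "\<dots> = (\<Sum>l<n. smult (W $$ (0,l)) (y l))"
      unfolding y_def by (simp only: smult_sum_right)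
    finally show ?thesis unfolding A_def .
  qed
  have ndy: "\<not>(\<exists>z. \<forall>l<n. dbl (y l) z)"
  proof
    assume "\<exists>z. \<forall>l<n. dbl (y l) z"
    then obtain z where z: "\<forall>l<n. dbl (y l) z" by blast
    have e1: "poly (y l) z = (\<Sum>j<Suc k. poly (C j) z * poly (S $$ (l,j)) z)" for l
      unfolding y_def poly_sum poly_mult by (intro sum.cong refl) (simp add: mult.commute)
    have P1: "\<forall>l<n. (\<Sum>j<Suc k. poly (C j) z * poly (S $$ (l,j)) z) = 0"
    proof (intro allI impI)
      fix l assume l: "l < n"
      have "poly (y l) z = 0" using z l unfolding dbl_def by blast
      thus "(\<Sum>j<Suc k. poly (C j) z * poly (S $$ (l,j)) z) = 0" using e1[of l] by simp
    qed
    have C0z: "\<forall>j<Suc k. poly (C j) z = 0"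
      using mp[OF spec[OF spec[OF hA, of z], of "\<lambda>j. poly (C j) z"] P1] by simp
    have e2: "poly (pderiv (y l)) z = (\<Sum>j<Suc k. poly (pderiv (C j)) z * poly (S $$ (l,j)) z)" for l
    proof -
      have "poly (pderiv (y l)) z = (\<Sum>j<Suc k. poly (S $$ (l,j) * pderiv (C j) + C j * pderiv (S $$ (l,j))) z)"
        unfolding y_def pderiv_sum pderiv_mult poly_sum ..
      also have "\<dots> = (\<Sum>j<Suc k. poly (pderiv (C j)) z * poly (S $$ (l,j)) z)"
      proof (rule sum.cong[OF refl])
        fix j assume "j \<in> {..<Suc k}"
        hence "poly (C j) z = 0" using C0z by simp
        thus "poly (S $$ (l,j) * pderiv (C j) + C j * pderiv (S $$ (l,j))) z = poly (pderiv (C j)) z * poly (S $$ (l,j)) z"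
          by (simp add: mult.commute)
      qed
      finally show ?thesis .
    qed
    have P2: "\<forall>l<n. (\<Sum>j<Suc k. poly (pderiv (C j)) z * poly (S $$ (l,j)) z) = 0"
    proof (intro allI impI)
      fix l assume l: "l < n"
      have "poly (pderiv (y l)) z = 0" using z l unfolding dbl_def by blast
      thus "(\<Sum>j<Suc k. poly (pderiv (C j)) z * poly (S $$ (l,j)) z) = 0" using e2[of l] by simp
    qed
    have C1z: "\<forall>j<Suc k. poly (pderiv (C j)) z = 0"
      using mp[OF spec[OF spec[OF hA, of z], of "\<lambda>j. poly (pderiv (C j)) z"] P2] by simp
    have "dbl (C 0) z" using C0z C1z unfolding dbl_def by blast
    hence "dbl (det (const_pmat W' * S')) z" using C0 by simp
    thus False using ndW' by blast
  qed
  have lcy: "\<exists>l<n. coeff (y l) M \<noteq> 0"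
  proof (rule ccontr)
    assume "\<not> (\<exists>l<n. coeff (y l) M \<noteq> 0)"
    hence h: "\<forall>l<n. coeff (y l) M = 0" by simp
    have P: "\<forall>l<n. (\<Sum>j<Suc k. coeff (C j) (M - m j) * coeff (S $$ (l,j)) (m j)) = 0"
    proof (intro allI impI)
      fix l assume l: "l < n"
      have "0 = coeff (y l) M" using h l by simp
      also have "\<dots> = (\<Sum>j<Suc k. coeff (S $$ (l,j) * C j) M)" unfolding y_def coeff_sum ..
      also have "\<dots> = (\<Sum>j<Suc k. coeff (C j) (M - m j) * coeff (S $$ (l,j)) (m j))"
      proof (rule sum.cong[OF refl])
        fix j assume "j \<in> {..<Suc k}"
        hence j: "j < Suc k" by simp
        have "coeff (S $$ (l,j) * C j) (m j + (M - m j)) = coeff (S $$ (l,j)) (m j) * coeff (C j) (M - m j)"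
          by (rule coeff_mult_le) (use deg l j degC in auto)
        thus "coeff (S $$ (l,j) * C j) M = coeff (C j) (M - m j) * coeff (S $$ (l,j)) (m j)"
          using mjM[OF j] by (simp add: mult.commute)
      qed
      finally show "(\<Sum>j<Suc k. coeff (C j) (M - m j) * coeff (S $$ (l,j)) (m j)) = 0" by simp
    qed
    have "\<forall>j<Suc k. coeff (C j) (M - m j) = 0"
      using mp[OF spec[OF hB, of "\<lambda>j. coeff (C j) (M - m j)"] P] by simp
    hence "coeff (C 0) (M - m 0) = 0" by blast
    thus False using lcW' C0 M0 by simp
  qed
  obtain w where w: "coeff (\<Sum>l<n. smult (w l) (y l)) M \<noteq> 0"
    "\<not>(\<exists>z. dbl (\<Sum>l<n. smult (w l) (y l)) z)"
    using lin_comb[OF lcy ndy] by blast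
  define W where "W = mat (Suc k) n (\<lambda>(r,l). if r = 0 then w l else W' $$ (r - 1, l))"
  have W: "W \<in> carrier_mat (Suc k) n" unfolding W_def by simp
  have "det (const_pmat W * S) = (\<Sum>l<n. smult (w l) (y l))"
  proof -
    have "\<forall>r<k. \<forall>l<n. W $$ (Suc r, l) = W' $$ (r,l)" unfolding W_def by simp
    from lap[OF W this] show ?thesis unfolding W_def by simp
  qed
  note dW = this
  show ?case
    apply (rule bexI[OF _ W])
    unfolding dW M_def[symmetric] using w by blast
qed


lemma to_fract_sum: "to_fract (sum f A) = (\<Sum>x\<in>A. to_fract (f x))"
  by (induction A rule: infinite_finite_induct) auto

lemma replace_basis:
  fixes P S :: "complex poly mat" and x b :: "nat \<Rightarrow> complex poly" and a :: "complex poly"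
  assumes PB: "poly_basis_right_nullspace P S" and S: "S \<in> carrier_mat n k"
  and j: "j < k" and a: "a \<noteq> 0" and bj: "b j \<noteq> 0"
  and hx: "\<forall>l<n. a * x l = (\<Sum>i<k. S $$ (l,i) * b i)"
  shows "poly_basis_right_nullspace P (mat n k (\<lambda>(l,i). if i = j then x l else S $$ (l,i)))"
proof -
  define T where "T = mat n k (\<lambda>(l,i). if i = j then x l else S $$ (l,i))"
  define E :: "complex poly fract mat" where "E = mat k k (\<lambda>(r,i). if i = j then to_fract (b r) / to_fract a else (if r = i then 1 else 0))"
  have dimP: "dim_col P = n" using PB S unfolding poly_basis_right_nullspace_def by auto
  have colsS: "\<forall>i<k. map_vec to_fract (col S i) \<in> right_nullspace P"
    and indS: "\<forall>c. dim_vec c = k \<longrightarrow> fmat S *\<^sub>v c = 0\<^sub>v n \<longrightarrow> c = 0\<^sub>v k"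
    and spanS: "\<forall>x \<in> right_nullspace P. \<exists>c. dim_vec c = k \<and> x = fmat S *\<^sub>v c"
    using PB S unfolding poly_basis_right_nullspace_def by auto
  have fS: "fmat S \<in> carrier_mat n k" using S unfolding fmat_def by simp
  have fT: "fmat T \<in> carrier_mat n k" unfolding T_def fmat_def by simp
  have E: "E \<in> carrier_mat k k" unfolding E_def by simp
  have Ev: "(E *\<^sub>v d) $ r = (if r = j then 0 else d $ r) + to_fract (b r) / to_fract a * d $ j"
    if r: "r < k" and d: "dim_vec d = k" for r d
  proof -
    have "(E *\<^sub>v d) $ r = (\<Sum>i\<in>{0..<k}. E $$ (r,i) * d $ i)"
      using r d E by (simp add: scalar_prod_def)
    also have "\<dots> = (\<Sum>i\<in>{0..<k}. (if i = j then to_fract (b r) / to_fract a * d $ j else 0) + (if i = r \<and> r \<noteq> j then d $ r else 0))"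
      by (rule sum.cong[OF refl]) (use r in \<open>auto simp: E_def\<close>)
    also have "\<dots> = to_fract (b r) / to_fract a * d $ j + (if r = j then 0 else d $ r)"
      unfolding sum.distrib using j r by (simp add: sum.delta)
    finally show ?thesis by simp
  qed
  have TE: "fmat T = fmat S * E"
  proof (rule eq_matI)
    fix l i assume "l < dim_row (fmat S * E)" "i < dim_col (fmat S * E)"
    hence li: "l < n" "i < k" using fS E by auto
    have "(fmat S * E) $$ (l,i) = (\<Sum>r\<in>{0..<k}. to_fract (S $$ (l,r)) * E $$ (r,i))"
      using li fS E S by (simp add: scalar_prod_def fmat_def)
    also have "\<dots> = to_fract (T $$ (l,i))"
    proof (cases "i = j")
      case True
      have "(\<Sum>r\<in>{0..<k}. to_fract (S $$ (l,r)) * E $$ (r,i))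
          = (\<Sum>r\<in>{0..<k}. to_fract (S $$ (l,r) * b r) / to_fract a)"
        by (rule sum.cong[OF refl]) (use True j in \<open>auto simp: E_def\<close>)
      also have "\<dots> = to_fract (\<Sum>r<k. S $$ (l,r) * b r) / to_fract a"
        by (simp add: to_fract_sum sum_divide_distrib atLeast0LessThan)
      also have "\<dots> = to_fract (a * x l) / to_fract a" using hx li by simp
      also have "\<dots> = to_fract (x l)" using a by simp
      finally show ?thesis using True li unfolding T_def by simp
    next
      case False
      have "(\<Sum>r\<in>{0..<k}. to_fract (S $$ (l,r)) * E $$ (r,i))
          = (\<Sum>r\<in>{0..<k}. if r = i then to_fract (S $$ (l,i)) else 0)"
        by (rule sum.cong[OF refl]) (use False li in \<open>auto simp: E_def\<close>)
      also have "\<dots> = to_fract (S $$ (l,i))" using li by (simp add: sum.delta')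
      finally show ?thesis using False li unfolding T_def by simp
    qed
    also have "\<dots> = fmat T $$ (l,i)" using li unfolding fmat_def T_def by simp
    finally show "fmat T $$ (l,i) = (fmat S * E) $$ (l,i)" by simp
  qed (use fS E fT in auto)
  have PS0: "fmat P * fmat S = 0\<^sub>m (dim_row P) k"
  proof (rule eq_matI)
    fix r i assume "r < dim_row (0\<^sub>m (dim_row P) k :: complex poly fract mat)" "i < dim_col (0\<^sub>m (dim_row P) k :: complex poly fract mat)"
    hence ri: "r < dim_row P" "i < k" by auto
    have "map_vec to_fract (col S i) \<in> right_nullspace P" using colsS ri by auto
    hence z: "fmat P *\<^sub>v map_vec to_fract (col S i) = 0\<^sub>v (dim_row P)" unfolding right_nullspace_def by auto
    have "(fmat P * fmat S) $$ (r,i) = row (fmat P) r \<bullet> col (fmat S) i"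
      using ri fS unfolding fmat_def by simp
    also have "\<dots> = (fmat P *\<^sub>v map_vec to_fract (col S i)) $ r"
      using ri S unfolding fmat_def by simp
    also have "\<dots> = 0" using z ri by simp
    finally show "(fmat P * fmat S) $$ (r,i) = (0\<^sub>m (dim_row P) k :: complex poly fract mat) $$ (r,i)" using ri by simp
  qed (use fS in \<open>auto simp: fmat_def\<close>)
  have fP: "fmat P \<in> carrier_mat (dim_row P) n" using dimP unfolding fmat_def by auto
  have c1: "\<forall>i<dim_col T. map_vec to_fract (col T i) \<in> right_nullspace P"
  proof (intro allI impI)
    fix i assume "i < dim_col T"
    hence i: "i < k" unfolding T_def by simp
    have "map_vec to_fract (col T i) = col (fmat T) i" using i unfolding fmat_def T_def by simp
    also have "\<dots> = fmat S *\<^sub>v col E i" unfolding TE by (rule col_mult2[OF fS E i])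
    finally have eq: "map_vec to_fract (col T i) = fmat S *\<^sub>v col E i" .
    have "fmat P *\<^sub>v (fmat S *\<^sub>v col E i) = (fmat P * fmat S) *\<^sub>v col E i"
      using fP fS E i by simp
    also have "\<dots> = 0\<^sub>v (dim_row P)" unfolding PS0 using E i by auto
    finally show "map_vec to_fract (col T i) \<in> right_nullspace P"
      unfolding right_nullspace_def eq using fS dimP by simp
  qed
  have c2: "\<forall>c. dim_vec c = dim_col T \<longrightarrow> fmat T *\<^sub>v c = 0\<^sub>v (dim_row T) \<longrightarrow> c = 0\<^sub>v (dim_col T)"
  proof (intro allI impI)
    fix d assume d: "dim_vec d = dim_col T" and z: "fmat T *\<^sub>v d = 0\<^sub>v (dim_row T)"
    have dk: "dim_vec d = k" using d unfolding T_def by simp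
    have TEd: "fmat T *\<^sub>v d = fmat S *\<^sub>v (E *\<^sub>v d)"
      unfolding TE by (rule assoc_mult_mat_vec[OF fS E]) (use dk in auto)
    have dT: "dim_row T = n" unfolding T_def by simp
    have "fmat S *\<^sub>v (E *\<^sub>v d) = 0\<^sub>v n" using z unfolding TEd dT .
    moreover have "dim_vec (E *\<^sub>v d) = k" using E by simp
    ultimately have Ed: "E *\<^sub>v d = 0\<^sub>v k" using spec[OF indS, of "E *\<^sub>v d"] by blast
    have dj: "d $ j = 0"
    proof -
      have "(E *\<^sub>v d) $ j = 0" using Ed j by simp
      hence "to_fract (b j) / to_fract a * d $ j = 0" using Ev[OF j dk] by simp
      thus ?thesis using a bj by simp
    qed
    show "d = 0\<^sub>v (dim_col T)"
    proof (rule eq_vecI)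
      fix r assume "r < dim_vec (0\<^sub>v (dim_col T) :: complex poly fract vec)"
      hence r: "r < k" unfolding T_def by simp
      have "(E *\<^sub>v d) $ r = 0" using Ed r by simp
      hence "(if r = j then 0 else d $ r) = 0" using Ev[OF r dk] dj by simp
      thus "d $ r = (0\<^sub>v (dim_col T)) $ r" using dj r unfolding T_def by (cases "r = j") auto
    qed (use dk in \<open>auto simp: T_def\<close>)
  qed
  have c3: "\<forall>y \<in> right_nullspace P. \<exists>c. dim_vec c = dim_col T \<and> y = fmat T *\<^sub>v c"
  proof
    fix y assume "y \<in> right_nullspace P"
    then obtain c where c: "dim_vec c = k" "y = fmat S *\<^sub>v c" using spanS by blast
    define d where "d = vec k (\<lambda>i. if i = j then c $ j * to_fract a / to_fract (b j) else c $ i - to_fract (b i) / to_fract (b j) * c $ j)"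
    have dk: "dim_vec d = k" unfolding d_def by simp
    have "E *\<^sub>v d = c"
    proof (rule eq_vecI)
      fix r assume "r < dim_vec c"
      hence r: "r < k" using c by simp
      have "(E *\<^sub>v d) $ r = (if r = j then 0 else d $ r) + to_fract (b r) / to_fract a * d $ j"
        by (rule Ev[OF r dk])
      also have "\<dots> = c $ r"
      proof (cases "r = j")
        case True
        have "to_fract (b j) / to_fract a * (c $ j * to_fract a / to_fract (b j)) = c $ j"
          using a bj by (simp add: field_simps)
        thus ?thesis using True j unfolding d_def by simp
      next
        case False
        have "c $ r - to_fract (b r) / to_fract (b j) * c $ j + to_fract (b r) / to_fract a * (c $ j * to_fract a / to_fract (b j)) = c $ r"
          using a bj by (simp add: field_simps)
        thus ?thesis using False j r unfolding d_def by simp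
      qed
      finally show "(E *\<^sub>v d) $ r = c $ r" .
    qed (use E c in auto)
    moreover have "fmat T *\<^sub>v d = fmat S *\<^sub>v (E *\<^sub>v d)"
      unfolding TE by (rule assoc_mult_mat_vec[OF fS E]) (use dk in auto)
    ultimately have "y = fmat T *\<^sub>v d" using c(2) by simp
    thus "\<exists>c. dim_vec c = dim_col T \<and> y = fmat T *\<^sub>v c" using dk unfolding T_def by auto
  qed
  have "dim_row T = dim_col P" using dimP unfolding T_def by simp
  thus ?thesis using c1 c2 c3 unfolding poly_basis_right_nullspace_def T_def by blast
qed


lemma vdeg_set: "{degree (v $ i) | i. i < dim_vec v} = (\<lambda>i. degree (v $ i)) ` {..<dim_vec v}"
  by auto

lemma vdeg_ge: "l < dim_vec v \<Longrightarrow> degree (v $ l) \<le> vdeg v"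
  unfolding vdeg_def vdeg_set by (rule Max_ge) auto

lemma vdeg_less: "(\<forall>l<dim_vec v. degree (v $ l) < N) \<Longrightarrow> 0 < N \<Longrightarrow> vdeg v < N"
  unfolding vdeg_def vdeg_set by (subst Max_less_iff) auto

lemma minimal_no_replace:
  fixes P S :: "complex poly mat" and x b :: "nat \<Rightarrow> complex poly" and a :: "complex poly"
  assumes MB: "minimal_basis_right_nullspace P S" and S: "S \<in> carrier_mat n k"
  and j: "j < k" and a: "a \<noteq> 0" and bj: "b j \<noteq> 0"
  and hx: "\<forall>l<n. a * x l = (\<Sum>i<k. S $$ (l,i) * b i)"
  and hd: "\<forall>l<n. x l = 0 \<or> degree (x l) < vdeg (col S j)"
  shows False
proof -
  define T where "T = mat n k (\<lambda>(l,i). if i = j then x l else S $$ (l,i))"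
  have PBS: "poly_basis_right_nullspace P S" using MB unfolding minimal_basis_right_nullspace_def by blast
  have PBT: "poly_basis_right_nullspace P T"
    unfolding T_def by (rule replace_basis[OF PBS S j a bj hx])
  have le: "col_deg_sum S \<le> col_deg_sum T" using MB PBT unfolding minimal_basis_right_nullspace_def by blast
  have T: "T \<in> carrier_mat n k" unfolding T_def by simp
  show False
  proof (cases "vdeg (col S j) = 0")
    case True
    hence x0: "\<forall>l<n. x l = 0" using hd by simp
    have indT: "\<forall>c. dim_vec c = k \<longrightarrow> fmat T *\<^sub>v c = 0\<^sub>v n \<longrightarrow> c = 0\<^sub>v k"
      using PBT T unfolding poly_basis_right_nullspace_def by auto
    define u :: "complex poly fract vec" where "u = unit_vec k j"
    have "fmat T *\<^sub>v u = 0\<^sub>v n"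
    proof (rule eq_vecI)
      fix l assume "l < dim_vec (0\<^sub>v n :: complex poly fract vec)"
      hence l: "l < n" by simp
      have "(fmat T *\<^sub>v u) $ l = row (fmat T) l \<bullet> unit_vec k j" using l T unfolding u_def fmat_def by simp
      also have "\<dots> = row (fmat T) l $ j" using j T by (intro scalar_prod_right_unit) (auto simp: fmat_def)
      also have "\<dots> = 0" using l j x0 T unfolding fmat_def T_def by simp
      finally show "(fmat T *\<^sub>v u) $ l = (0\<^sub>v n) $ l" using l by simp
    qed (use T in \<open>auto simp: fmat_def\<close>)
    hence "u = 0\<^sub>v k" using indT unfolding u_def by simp
    hence "u $ j = 0" using j by simp
    thus False unfolding u_def using j by simp
  next
    case False
    have colT: "col T i = col S i" if "i < k" "i \<noteq> j" for i
      using that S unfolding T_def by (intro eq_vecI) auto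
    have "vdeg (col T j) < vdeg (col S j)"
    proof (rule vdeg_less)
      show "\<forall>l<dim_vec (col T j). degree (col T j $ l) < vdeg (col S j)"
        using hd False j unfolding T_def by auto
    qed (use False in auto)
    note lt = this
    have dT: "dim_col T = k" and dS: "dim_col S = k" using S T by auto
    have "(\<Sum>i<k. vdeg (col T i)) < (\<Sum>i<k. vdeg (col S i))"
    proof (rule sum_strict_mono_ex1)
      show "\<forall>i\<in>{..<k}. vdeg (col T i) \<le> vdeg (col S i)" using colT lt by fastforce
      show "\<exists>i\<in>{..<k}. vdeg (col T i) < vdeg (col S i)" using lt j by blast
    qed simp
    hence "col_deg_sum T < col_deg_sum S" unfolding col_deg_sum_def dT dS .
    thus False using le by simp
  qed
qed

lemma pick_max:
  fixes c :: "nat \<Rightarrow> complex" and m :: "nat \<Rightarrow> nat"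
  assumes "\<exists>i<k. c i \<noteq> 0"
  shows "\<exists>j<k. c j \<noteq> 0 \<and> (\<forall>i<k. c i \<noteq> 0 \<longrightarrow> m i \<le> m j)"
proof -
  define J where "J = {i. i < k \<and> c i \<noteq> 0}"
  have fin: "finite (m ` J)" unfolding J_def by simp
  have ne: "m ` J \<noteq> {}" using assms unfolding J_def by auto
  obtain j where j: "j \<in> J" "m j = Max (m ` J)" using Max_in[OF fin ne] by auto
  have "\<forall>i<k. c i \<noteq> 0 \<longrightarrow> m i \<le> m j"
  proof (intro allI impI)
    fix i assume "i < k" "c i \<noteq> 0"
    hence "m i \<in> m ` J" unfolding J_def by auto
    thus "m i \<le> m j" using Max_ge[OF fin] j(2) by simp
  qed
  thus ?thesis using j(1) unfolding J_def by auto
qed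

lemma hypA:
  fixes P S :: "complex poly mat"
  assumes MB: "minimal_basis_right_nullspace P S" and S: "S \<in> carrier_mat n k"
  shows "\<forall>z c. (\<forall>l<n. (\<Sum>i<k. c i * poly (S $$ (l,i)) z) = 0) \<longrightarrow> (\<forall>i<k. c i = 0)"
proof (rule allI, rule allI, rule impI, rule ccontr)
  fix z and c :: "nat \<Rightarrow> complex"
  assume h: "\<forall>l<n. (\<Sum>i<k. c i * poly (S $$ (l,i)) z) = 0" and nz: "\<not> (\<forall>i<k. c i = 0)"
  obtain j where j: "j < k" "c j \<noteq> 0" and jmax: "\<forall>i<k. c i \<noteq> 0 \<longrightarrow> vdeg (col S i) \<le> vdeg (col S j)"
    using pick_max[of k c "\<lambda>i. vdeg (col S i)"] nz by blast
  define q where "q l = (\<Sum>i<k. S $$ (l,i) * [:c i:])" for l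
  define x where "x l = q l div [:-z,1:]" for l
  have dv: "[:-z,1:] dvd q l" if l: "l < n" for l
  proof -
    have "poly (q l) z = (\<Sum>i<k. c i * poly (S $$ (l,i)) z)"
      unfolding q_def poly_sum by (intro sum.cong refl) (simp add: mult.commute)
    thus ?thesis using h l poly_eq_0_iff_dvd by metis
  qed
  have qx: "[:-z,1:] * x l = q l" if l: "l < n" for l
    unfolding x_def using dv[OF l] by (rule dvd_mult_div_cancel)
  have hx: "\<forall>l<n. [:-z,1:] * x l = (\<Sum>i<k. S $$ (l,i) * [:c i:])"
    using qx unfolding q_def by blast
  have hd: "\<forall>l<n. x l = 0 \<or> degree (x l) < vdeg (col S j)"
  proof (intro allI impI)
    fix l assume l: "l < n"
    show "x l = 0 \<or> degree (x l) < vdeg (col S j)"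
    proof (cases "x l = 0")
      case False
      have "degree (q l) \<le> vdeg (col S j)" unfolding q_def
      proof (rule degree_sum_le)
        fix i assume "i \<in> {..<k}"
        hence i: "i < k" by simp
        show "degree (S $$ (l,i) * [:c i:]) \<le> vdeg (col S j)"
        proof (cases "c i = 0")
          case False
          have "degree (S $$ (l,i) * [:c i:]) \<le> degree (S $$ (l,i))"
            by (metis degree_mult_le degree_pCons_0 add_0_right)
          also have "\<dots> \<le> vdeg (col S i)" using vdeg_ge[of l "col S i"] l i S by simp
          also have "\<dots> \<le> vdeg (col S j)" using jmax i False by simp
          finally show ?thesis .
        qed simp
      qed simp
      note dq = this
      have "degree ([:-z,1:] * x l) = degree [:-z,1:] + degree (x l)"
        using False by (intro degree_mult_eq) auto
      hence "degree (q l) = 1 + degree (x l)" using qx[OF l] by simp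
      thus ?thesis using dq by simp
    qed simp
  qed
  show False
    by (rule minimal_no_replace[OF MB S j(1) _ _ hx hd]) (use j in auto)
qed

lemma hypB:
  fixes P S :: "complex poly mat"
  assumes MB: "minimal_basis_right_nullspace P S" and S: "S \<in> carrier_mat n k"
  shows "\<forall>c. (\<forall>l<n. (\<Sum>i<k. c i * coeff (S $$ (l,i)) (vdeg (col S i))) = 0) \<longrightarrow> (\<forall>i<k. c i = 0)"
proof (rule allI, rule impI, rule ccontr)
  fix c :: "nat \<Rightarrow> complex"
  define m where "m i = vdeg (col S i)" for i
  assume h: "\<forall>l<n. (\<Sum>i<k. c i * coeff (S $$ (l,i)) (vdeg (col S i))) = 0" and nz: "\<not> (\<forall>i<k. c i = 0)"
  obtain j where j: "j < k" "c j \<noteq> 0" and jmax: "\<forall>i<k. c i \<noteq> 0 \<longrightarrow> m i \<le> m j"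
    using pick_max[of k c m] nz by blast
  define b where "b i = monom (c i) (m j - m i)" for i
  define x where "x l = (\<Sum>i<k. S $$ (l,i) * b i)" for l
  have hx: "\<forall>l<n. 1 * x l = (\<Sum>i<k. S $$ (l,i) * b i)" unfolding x_def by simp
  have degS: "degree (S $$ (l,i)) \<le> m i" if "l < n" "i < k" for l i
    using vdeg_ge[of l "col S i"] that S unfolding m_def by simp
  have hd: "\<forall>l<n. x l = 0 \<or> degree (x l) < vdeg (col S j)"
  proof (intro allI impI)
    fix l assume l: "l < n"
    have dx: "degree (x l) \<le> m j" unfolding x_def
    proof (rule degree_sum_le)
      fix i assume "i \<in> {..<k}"
      hence i: "i < k" by simp
      show "degree (S $$ (l,i) * b i) \<le> m j"
      proof (cases "c i = 0")
        case False
        have "degree (S $$ (l,i) * b i) \<le> degree (S $$ (l,i)) + degree (b i)" by (rule degree_mult_le)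
        also have "\<dots> \<le> m i + (m j - m i)" using degS[OF l i] unfolding b_def
          by (intro add_mono) (auto simp: degree_monom_le)
        also have "\<dots> = m j" using jmax i False by simp
        finally show ?thesis .
      qed (simp add: b_def)
    qed simp
    have cx: "coeff (x l) (m j) = 0"
    proof -
      have "coeff (x l) (m j) = (\<Sum>i<k. c i * coeff (S $$ (l,i)) (vdeg (col S i)))"
        unfolding x_def coeff_sum
      proof (rule sum.cong[OF refl])
        fix i assume "i \<in> {..<k}"
        hence i: "i < k" by simp
        show "coeff (S $$ (l,i) * b i) (m j) = c i * coeff (S $$ (l,i)) (vdeg (col S i))"
        proof (cases "c i = 0")
          case False
          hence le: "m i \<le> m j" using jmax i by simp
          have "coeff (S $$ (l,i) * b i) (m j) = coeff (monom (c i) (m j - m i) * S $$ (l,i)) (m j)"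
            unfolding b_def by (simp add: mult.commute)
          also have "\<dots> = c i * coeff (S $$ (l,i)) (m i)" using le by (simp add: coeff_monom_mult)
          finally show ?thesis unfolding m_def .
        qed (simp add: b_def)
      qed
      thus ?thesis using h l by simp
    qed
    show "x l = 0 \<or> degree (x l) < vdeg (col S j)"
    proof (rule disjCI)
      assume "\<not> degree (x l) < vdeg (col S j)"
      hence "degree (x l) = m j" using dx unfolding m_def by simp
      thus "x l = 0" using cx by (metis leading_coeff_0_iff)
    qed
  qed
  show False
    by (rule minimal_no_replace[OF MB S j(1) _ _ hx hd]) (use j in \<open>auto simp: b_def\<close>)
qed


theorem theoremA3:
  fixes P S :: "complex poly mat" and n k d :: nat and m :: "nat \<Rightarrow> nat"
  assumes "P \<in> carrier_mat n n"
    and "singular_pmat P"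
    and "mdeg P = d"
    and "nrank P = n - k" and "k \<le> n"
    and "S \<in> carrier_mat n k"
    and "minimal_basis_right_nullspace P S"
    and "\<forall>i < k. m i = vdeg (col S i)"
  shows "\<exists>V \<in> carrier_mat n k.
           det (const_pmat (mat_adjoint V) * S) \<noteq> 0 \<and>
           num_simple_zeros (det (const_pmat (mat_adjoint V) * S)) = (\<Sum>i < k. m i)"
proof -
  note S = assms(6) and MB = assms(7) and mm = assms(8)
  define m0 where "m0 i = vdeg (col S i)" for i
  have deg: "\<forall>l<n. \<forall>i<k. degree (S $$ (l,i)) \<le> m0 i"
  proof (intro allI impI)
    fix l i assume li: "l < n" "i < k"
    have "degree (col S i $ l) \<le> vdeg (col S i)" using li S by (intro vdeg_ge) auto
    thus "degree (S $$ (l,i)) \<le> m0 i" using li S unfolding m0_def by simp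
  qed
  have hB: "\<forall>c. (\<forall>l<n. (\<Sum>i<k. c i * coeff (S $$ (l,i)) (m0 i)) = 0) \<longrightarrow> (\<forall>i<k. c i = 0)"
    using hypB[OF MB S] unfolding m0_def .
  obtain W where W: "W \<in> carrier_mat k n"
    and lc: "coeff (det (const_pmat W * S)) (\<Sum>i<k. m0 i) \<noteq> 0"
    and nd: "\<not>(\<exists>z. dbl (det (const_pmat W * S)) z)"
    using main_ind[OF S deg hypA[OF MB S] hB] by blast
  have sm: "(\<Sum>i<k. m0 i) = (\<Sum>i<k. m i)" using mm unfolding m0_def by simp
  define V where "V = mat n k (\<lambda>(l,i). conjugate (W $$ (i,l)))"
  have V: "V \<in> carrier_mat n k" unfolding V_def by simp
  have VW: "mat_adjoint V = W"
  proof (rule eq_matI)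
    fix i l assume "i < dim_row W" "l < dim_col W"
    hence il: "i < k" "l < n" using W by auto
    show "mat_adjoint V $$ (i,l) = W $$ (i,l)"
      unfolding mat_adjoint_def using il V
      by (simp add: mat_of_rows_index V_def)
  qed (use W V in \<open>auto simp: mat_adjoint_def\<close>)
  define p where "p = det (const_pmat W * S)"
  have dp: "degree p \<le> (\<Sum>i<k. m0 i)" unfolding p_def
  proof (rule det_degree_le)
    show "const_pmat W * S \<in> carrier_mat k k" by (rule cp_carrier[OF W S])
    show "\<forall>r<k. \<forall>i<k. degree ((const_pmat W * S) $$ (r, i)) \<le> m0 i"
    proof (intro allI impI)
      fix r i assume ri: "r < k" "i < k"
      have "degree (\<Sum>l<n. smult (W $$ (r,l)) (S $$ (l,i))) \<le> m0 i"
      proof (rule degree_sum_le)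
        fix l assume "l \<in> {..<n}"
        thus "degree (smult (W $$ (r,l)) (S $$ (l,i))) \<le> m0 i"
          using deg ri degree_smult_le le_trans by blast
      qed simp
      thus "degree ((const_pmat W * S) $$ (r, i)) \<le> m0 i" using cp_index[OF W S ri] by simp
    qed
  qed
  have p0: "p \<noteq> 0" using lc unfolding p_def by auto
  have "(\<Sum>i<k. m0 i) \<le> degree p" using lc unfolding p_def by (rule le_degree)
  hence degp: "degree p = (\<Sum>i<k. m i)" using dp sm by simp
  have "num_simple_zeros p = degree p" using simple_zeros_count[OF p0] nd unfolding p_def by blast
  thus ?thesis using VW V p0 degp unfolding p_def by (intro bexI[of _ V]) auto
qed

end
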